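(* Let $(X_t, t>0)$ be a real-valued process and let $0<a\le 1$, $b_2\ge b_1\ge 0$ be constants. Assume there is $t_0>1$ such that for every $p>1$ there exists a constant $c_p>0$ with $$\|X_t\|_p\le c_p\,t^a(\log t)^{b_1}\quad\forall t>t_0,$$ $$\|X_t-X_s\|_p\le c_p\,(t-s)^a(\log t)^{b_2}\quad\text{for } t_0\le s\le t-1,$$ $$\Big\|\sup_{t\le u\le t+1}|X_u-X_t|\Big\|_p\le c_p\,t^{a/2}\quad\forall t>t_0.$$ Then for every $\epsilon>0$, $X_t=o\big(t^a(\log t)^{b_1+\epsilon}\big)$ almost surely as $t\to\infty$.
   Context: $\|\xi\|_p=(\mathbb{E}|\xi|^p)^{1/p}$ denotes the $L^p$-norm of a random variable $\xi$. *)

theory Defs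
  imports "HOL-Probability.Probability"
begin

definition epow :: "ennreal \<Rightarrow> real \<Rightarrow> ennreal" where
  "epow x r = (if x = \<infinity> then \<infinity> else ennreal (enn2real x powr r))"

definition Lp_norm_enn :: "'a measure \<Rightarrow> real \<Rightarrow> ('a \<Rightarrow> ennreal) \<Rightarrow> ennreal" where
  "Lp_norm_enn M p f = epow (\<integral>\<^sup>+ \<omega>. epow (f \<omega>) p \<partial>M) (1 / p)"

definition Lp_norm :: "'a measure \<Rightarrow> real \<Rightarrow> ('a \<Rightarrow> real) \<Rightarrow> ennreal" where
  "Lp_norm M p \<xi> = Lp_norm_enn M p (\<lambda>\<omega>. ennreal \<bar>\<xi> \<omega>\<bar>)"

end

theory Submission
  imports Defs "HOL-Real_Asymp.Real_Asymp"
begin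

lemma epow_meas[measurable]: "(\<lambda>x. epow x r) \<in> borel_measurable borel"
  unfolding epow_def by measurable

lemma markov_Lp:
  assumes "prob_space M" and fm: "f \<in> borel_measurable M" and p: "p > 0" and d: "d > 0" and B0: "B \<ge> 0"
    and B: "Lp_norm_enn M p f \<le> ennreal B"
  shows "measure M {\<omega>\<in>space M. f \<omega> > ennreal d} \<le> (B / d) powr p"
proof -
  interpret prob_space M by fact
  let ?I = "\<integral>\<^sup>+ \<omega>. epow (f \<omega>) p \<partial>M"
  have fin: "?I \<noteq> \<infinity>"
  proof
    assume "?I = \<infinity>" then have "Lp_norm_enn M p f = \<infinity>" by (simp add: Lp_norm_enn_def epow_def)
    with B show False by (simp add: top_unique)
  qed
  have "enn2real ?I powr (1/p) \<le> B"
    using B fin B0 unfolding Lp_norm_enn_def epow_def by simp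
  then have "(enn2real ?I powr (1/p)) powr p \<le> B powr p"
    using p by (intro powr_mono2) auto
  then have Ile: "enn2real ?I \<le> B powr p" using p by (simp add: powr_powr)
  have ind: "indicator {\<omega>\<in>space M. f \<omega> > ennreal d} \<omega> \<le> ennreal (1 / d powr p) * epow (f \<omega>) p"
    if "\<omega> \<in> space M" for \<omega>
  proof (cases "f \<omega> > ennreal d")
    case True
    show ?thesis
    proof (cases "f \<omega>" rule: ennreal_cases)
      case (real x)
      then have "x > d" using True d by (simp add: ennreal_less_iff)
      then have "d powr p \<le> x powr p" using d p by (intro powr_mono2) auto
      then have "1 \<le> (1 / d powr p) * x powr p" using d by (simp add: field_simps)
      then show ?thesis using real d that True
        by (simp add: epow_def indicator_def ennreal_mult[symmetric])
    next
      case top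
      then show ?thesis using d by (simp add: epow_def indicator_def ennreal_mult_top)
    qed
  qed (simp add: indicator_def)
  have "emeasure M {\<omega>\<in>space M. f \<omega> > ennreal d} = (\<integral>\<^sup>+ \<omega>. indicator {\<omega>\<in>space M. f \<omega> > ennreal d} \<omega> \<partial>M)"
    using fm by (intro nn_integral_indicator[symmetric]) measurable
  also have "\<dots> \<le> (\<integral>\<^sup>+ \<omega>. ennreal (1 / d powr p) * epow (f \<omega>) p \<partial>M)"
    using ind by (intro nn_integral_mono) auto
  also have "\<dots> = ennreal (1 / d powr p) * ?I" using fm by (intro nn_integral_cmult) measurable
  also have "\<dots> = ennreal (1 / d powr p * enn2real ?I)" 
  proof -
    have "ennreal (1 / d powr p * enn2real ?I) = ennreal (1 / d powr p) * ennreal (enn2real ?I)"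
      using d by (intro ennreal_mult) auto
    also have "ennreal (enn2real ?I) = ?I" using fin by (simp add: ennreal_enn2real_if)
    finally show ?thesis by simp
  qed
  also have "\<dots> \<le> ennreal ((B / d) powr p)"
  proof (intro ennreal_leI)
    have "1 / d powr p * enn2real ?I \<le> 1 / d powr p * B powr p"
      using Ile d by (intro mult_left_mono) auto
    also have "\<dots> = (B / d) powr p" using d B0 by (simp add: powr_divide)
    finally show "1 / d powr p * enn2real ?I \<le> (B / d) powr p" .
  qed
  finally show ?thesis by (simp add: measure_def enn2real_leI)
qed

lemma chain_bound:
  fixes f :: "nat \<Rightarrow> real" and d :: "nat \<Rightarrow> real"
  assumes "\<forall>l<r. \<forall>i<2^(r-l). \<bar>f ((i+1)*2^l) - f (i*2^l)\<bar> \<le> d l" and "j < 2^r"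
  shows "\<bar>f j - f 0\<bar> \<le> (\<Sum>l<r. d l)"
  using assms
proof (induction r arbitrary: f j)
  case 0
  then show ?case by simp
next
  case (Suc r)
  have dr: "\<bar>f (2^r) - f 0\<bar> \<le> d r" using Suc.prems(1)[rule_format, of r 0] by simp
  hence dr0: "d r \<ge> 0" by linarith
  show ?case
  proof (cases "j < 2^r")
    case True
    have "\<forall>l<r. \<forall>i<2^(r-l). \<bar>f ((i+1)*2^l) - f (i*2^l)\<bar> \<le> d l"
    proof (intro allI impI)
      fix l i assume l: "l < r" and i: "i < (2::nat)^(r-l)"
      have "(2::nat)^(r-l) \<le> 2^(Suc r - l)" by (intro power_increasing) auto
      then have "i < 2^(Suc r - l)" using i by linarith
      then show "\<bar>f ((i+1)*2^l) - f (i*2^l)\<bar> \<le> d l" using Suc.prems(1) l by simp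
    qed
    from Suc.IH[OF this True] dr0 show ?thesis by simp
  next
    case False
    define g where "g x = f (2^r + x)" for x
    have "\<forall>l<r. \<forall>i<2^(r-l). \<bar>g ((i+1)*2^l) - g (i*2^l)\<bar> \<le> d l"
    proof (intro allI impI)
      fix l i assume l: "l < r" and i: "i < (2::nat)^(r-l)"
      have e: "(2::nat)^r = 2^(r-l) * 2^l" using l by (simp add: power_add[symmetric])
      have e2: "(2::nat)^(Suc r - l) = 2 * 2^(r-l)" using l by (simp add: Suc_diff_le)
      have "i + 2^(r-l) < 2^(Suc r - l)" using i e2 by simp
      then have "\<bar>f ((i + 2^(r-l) + 1)*2^l) - f ((i + 2^(r-l))*2^l)\<bar> \<le> d l"
        using Suc.prems(1)[rule_format, of l "i + 2^(r-l)"] l by simp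
      then show "\<bar>g ((i+1)*2^l) - g (i*2^l)\<bar> \<le> d l"
        unfolding g_def e by (simp add: algebra_simps)
    qed
    moreover have "j - 2^r < 2^r" using Suc.prems(2) False by simp
    ultimately have "\<bar>g (j - 2^r) - g 0\<bar> \<le> (\<Sum>l<r. d l)" by (rule Suc.IH)
    then have "\<bar>f j - f (2^r)\<bar> \<le> (\<Sum>l<r. d l)" using False by (simp add: g_def)
    then show ?thesis using dr by simp
  qed
qed

lemma markov_real:
  assumes "prob_space M" and fm: "\<xi> \<in> borel_measurable M" and p: "p > 0" and d: "d > 0" and B0: "B \<ge> 0"
    and B: "Lp_norm M p \<xi> \<le> ennreal B"
  shows "measure M {\<omega>\<in>space M. d < \<bar>\<xi> \<omega>\<bar>} \<le> (B / d) powr p"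
proof -
  have "measure M {\<omega>\<in>space M. ennreal \<bar>\<xi> \<omega>\<bar> > ennreal d} \<le> (B / d) powr p"
    using assms by (intro markov_Lp[where f="\<lambda>\<omega>. ennreal \<bar>\<xi> \<omega>\<bar>"]) (auto simp: Lp_norm_def)
  moreover have "{\<omega>\<in>space M. ennreal \<bar>\<xi> \<omega>\<bar> > ennreal d} = {\<omega>\<in>space M. d < \<bar>\<xi> \<omega>\<bar>}"
    using d by (auto simp: ennreal_less_iff)
  ultimately show ?thesis by simp
qed

lemma ln_le_Suc:
  assumes "1 \<le> g" "g \<le> (2::nat)^(m+1)"
  shows "ln (real g) \<le> real m + 1"
proof -
  have "ln (real g) \<le> ln (2 ^ (m+1))" using assms by (subst ln_le_cancel_iff) (auto simp del: power_Suc)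
  also have "\<dots> = real (m+1) * ln 2" by (intro ln_realpow)
  also have "\<dots> = (real m + 1) * ln 2" by simp
  also have "\<dots> \<le> real m + 1" using ln_2_less_1 by (simp add: mult_left_le)
  finally show ?thesis .
qed

lemma coarse_prob:
  assumes "prob_space M" and fm: "Y \<in> borel_measurable M" and p: "p > 0" and c: "c > 0"
    and a: "a > 0" and b1: "b1 \<ge> 0" and g: "2 \<le> g" "g \<le> (2::nat)^(m+1)" and m: "m \<ge> 1"
    and B: "Lp_norm M p Y \<le> ennreal (c * real g powr a * ln (real g) powr b1)"
  shows "measure M {\<omega>\<in>space M. (2^(m+1)) powr a * (real m + 1) powr b1 * real m powr \<epsilon> < \<bar>Y \<omega>\<bar>}
          \<le> c powr p * real m powr (- \<epsilon> * p)"
proof -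
  let ?T = "(2^(m+1)) powr a * (real m + 1) powr b1 * real m powr \<epsilon> :: real"
  let ?B = "c * real g powr a * ln (real g) powr b1"
  have lg: "ln (real g) > 0" using g by simp
  have T: "?T > 0" using m by simp
  have "measure M {\<omega>\<in>space M. ?T < \<bar>Y \<omega>\<bar>} \<le> (?B / ?T) powr p"
    using assms T lg by (intro markov_real) auto
  also have "\<dots> \<le> (c / real m powr \<epsilon>) powr p"
  proof (intro powr_mono2)
    have "?B \<le> c * (2^(m+1)) powr a * (real m + 1) powr b1"
    proof -
      have "real g powr a \<le> (2^(m+1)) powr a" using g a by (intro powr_mono2) (auto simp del: power_Suc)
      moreover have "ln (real g) powr b1 \<le> (real m + 1) powr b1"
        using ln_le_Suc[of g m] g lg b1 by (intro powr_mono2) auto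
      ultimately show ?thesis using c by (intro mult_mono mult_left_mono) auto
    qed
    then show "?B / ?T \<le> c / real m powr \<epsilon>"
      using T m by (simp add: divide_simps mult_ac)
    show "0 \<le> ?B / ?T" using T c lg by simp
  qed (use p in auto)
  also have "\<dots> = c powr p * real m powr (- \<epsilon> * p)"
    using c m by (simp add: powr_divide powr_powr powr_minus_divide)
  finally show ?thesis .
qed

lemma fine_prob:
  assumes "prob_space M" and fm: "\<xi> \<in> borel_measurable M" and p: "p > 0" and c: "c > 0"
    and a: "a > 0" and b2: "b2 \<ge> 0" and s: "2 \<le> s" and t: "t = s + 2^l" "t \<le> (2::nat)^(m+1)" and m: "m \<ge> 1"
    and lm: "l \<le> m"
    and B: "Lp_norm M p \<xi> \<le> ennreal (c * (real t - real s) powr a * ln (real t) powr b2)"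
  shows "measure M {\<omega>\<in>space M. (2^m) powr a / real m < \<bar>\<xi> \<omega>\<bar>}
          \<le> (c * real m * (real m + 1) powr b2) powr p * 2 powr (- (real (m - l) * a * p))"
proof -
  let ?T = "(2^m) powr a / real m :: real"
  let ?B = "c * (real t - real s) powr a * ln (real t) powr b2"
  have "(2::real) \<le> real s" using s by simp
  moreover have "(0::real) < 2^l" by simp
  moreover have "real t = real s + 2^l" using t by simp
  ultimately have "real t > 1" by linarith
  then have lg: "ln (real t) > 0" by simp
  have T: "?T > 0" using m by simp
  have d: "real t - real s = 2^l" using t by simp
  have "measure M {\<omega>\<in>space M. ?T < \<bar>\<xi> \<omega>\<bar>} \<le> (?B / ?T) powr p"
    using assms T lg d by (intro markov_real) auto
  also have "\<dots> \<le> (c * real m * (real m + 1) powr b2 * 2 powr (- (real (m - l) * a))) powr p"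
  proof (intro powr_mono2)
    have "ln (real t) powr b2 \<le> (real m + 1) powr b2"
      using ln_le_Suc[of t m] s t lg b2 by (intro powr_mono2) auto
    then have "?B \<le> c * (2^l) powr a * (real m + 1) powr b2" using c d by (simp add: mult_left_mono)
    moreover have "(2^l) powr a / (2^m) powr a = (2::real) powr (- (real (m - l) * a))"
      using lm by (simp add: powr_realpow[symmetric] powr_powr powr_diff[symmetric] of_nat_diff algebra_simps)
    ultimately show "?B / ?T \<le> c * real m * (real m + 1) powr b2 * 2 powr (- (real (m - l) * a))"
      using T m c
      by (simp add: divide_simps mult_ac)
    show "0 \<le> ?B / ?T" using T c lg by simp
  qed (use p in auto)
  also have "\<dots> = (c * real m * (real m + 1) powr b2) powr p * 2 powr (- (real (m - l) * a * p))"
    using c m by (simp add: powr_mult powr_powr)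
  finally show ?thesis .
qed

lemma arith_coarse:
  fixes x y c p K :: real
  assumes x: "x \<ge> 1" and y: "y \<le> x powr K" and K: "K \<ge> 0" and ep: "e * p = K + 2" and c: "c > 0"
  shows "(y + 1) * (c powr p * x powr (- e * p)) \<le> 2 * c powr p * x powr (-2)"
proof -
  have "1 \<le> x powr K" using x K by (rule ge_one_powr_ge_zero)
  then have "y + 1 \<le> 2 * x powr K" using y by linarith
  then have "(y + 1) * (c powr p * x powr (- e * p)) \<le> (2 * x powr K) * (c powr p * x powr (- e * p))"
    by (intro mult_right_mono) auto
  also have "\<dots> = 2 * c powr p * (x powr K * x powr (- (K + 2)))" using ep by (simp add: algebra_simps)
  also have "x powr K * x powr (- (K + 2)) = x powr (-2)" using x by (simp add: powr_add[symmetric])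
  finally show ?thesis by simp
qed

lemma arith_fine:
  fixes x y c p K a b2 :: real
  assumes x: "x \<ge> 1" and y: "(x/2) powr K \<le> y" and K: "K \<ge> 0" and c: "c > 0" and b2: "b2 \<ge> 0"
    and ap: "a * p \<ge> 1" and p: "p > 0"
    and ex: "K * (a * p - 1) \<ge> (b2 + 1) * p + 3"
  shows "x * ((c * x * (x + 1) powr b2) powr p * y powr (1 - a * p))
         \<le> (c powr p * 2 powr (b2 * p) * 2 powr (K * (a * p - 1))) * x powr (-2)"
proof -
  have x0: "x > 0" using x by simp
  have "(c * x * (x + 1) powr b2) powr p \<le> (c * x * (2 * x) powr b2) powr p"
    using x c b2 p by (intro powr_mono2 mult_left_mono) auto
  also have "\<dots> = c powr p * 2 powr (b2 * p) * x powr ((1 + b2) * p)"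
    using x0 c by (simp add: powr_mult powr_powr powr_add algebra_simps)
  finally have A: "(c * x * (x + 1) powr b2) powr p \<le> c powr p * 2 powr (b2 * p) * x powr ((1 + b2) * p)" .
  have "y powr (1 - a * p) \<le> ((x/2) powr K) powr (1 - a * p)"
    using y ap x0 by (intro powr_mono2') auto
  also have "\<dots> = x powr (K * (1 - a * p)) * 2 powr (K * (a * p - 1))"
    using x0 by (simp add: powr_powr powr_divide powr_minus_divide algebra_simps divide_simps powr_add[symmetric])
  finally have B: "y powr (1 - a * p) \<le> x powr (K * (1 - a * p)) * 2 powr (K * (a * p - 1))" .
  have "x * ((c * x * (x + 1) powr b2) powr p * y powr (1 - a * p))
      \<le> x * ((c powr p * 2 powr (b2 * p) * x powr ((1 + b2) * p)) * (x powr (K * (1 - a * p)) * 2 powr (K * (a * p - 1))))"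
    using A B x0 by (intro mult_left_mono mult_mono) auto
  moreover have E: "x powr (1 + (1 + b2) * p + K * (1 - a * p)) = x powr 1 * x powr ((1 + b2) * p) * x powr (K * (1 - a * p))"
    by (simp only: powr_add)
  moreover have "x * ((c powr p * 2 powr (b2 * p) * x powr ((1 + b2) * p)) * (x powr (K * (1 - a * p)) * 2 powr (K * (a * p - 1))))
     = (c powr p * 2 powr (b2 * p) * 2 powr (K * (a * p - 1))) * x powr (1 + (1 + b2) * p + K * (1 - a * p))"
    unfolding E using x0 by (simp add: algebra_simps)
  moreover have "(c powr p * 2 powr (b2 * p) * 2 powr (K * (a * p - 1))) * x powr (1 + (1 + b2) * p + K * (1 - a * p)) \<le> (c powr p * 2 powr (b2 * p) * 2 powr (K * (a * p - 1))) * x powr (-2)"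
    using x ex by (intro mult_left_mono powr_mono) (auto simp: algebra_simps)
  ultimately show ?thesis by linarith
qed

lemma arith_final:
  fixes m j :: nat and a b1 e :: real
  assumes m: "m \<ge> 1" and j: "2^m \<le> j" and a: "a > 0" and b1: "b1 \<ge> 0" and e: "e > 0"
  shows "(2^(m+1)) powr a * (real m + 1) powr b1 * real m powr e + (2^m) powr a
     \<le> ((2 powr a + 1) * 3 powr (b1 + e)) * real j powr a * ln (real j) powr (b1 + e)"
proof -
  have j0: "0 < j" by (rule less_le_trans[OF _ j]) simp
  have "ln (2^m) \<le> ln (real j)" using j j0 by (subst ln_le_cancel_iff) (auto simp: of_nat_le_iff[symmetric])
  moreover have "ln ((2::real)^m) = real m * ln 2" by (intro ln_realpow)
  ultimately have lnj: "real m * ln 2 \<le> ln (real j)" by simp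
  have "real m * (2/3) \<le> real m * ln 2" using ln2_ge_two_thirds by (intro mult_left_mono) auto
  then have mj: "real m + 1 \<le> 3 * ln (real j)" using lnj m by linarith
  have mj': "real m \<le> 3 * ln (real j)" using mj by linarith
  have L: "3 * ln (real j) \<ge> 1" using mj m by linarith
  have pj: "(2::real)^m \<le> real j" using j by (simp add: of_nat_le_iff[symmetric])
  have ja: "(2^m) powr a \<le> real j powr a" using pj a by (intro powr_mono2) auto
  have "(2^(m+1)) powr a = 2 powr a * (2^m) powr a" by (simp add: powr_mult[symmetric])
  also have "\<dots> \<le> 2 powr a * real j powr a" using ja by simp
  finally have A: "(2^(m+1)) powr a \<le> 2 powr a * real j powr a" .
  have B: "(real m + 1) powr b1 * real m powr e \<le> (3 * ln (real j)) powr b1 * (3 * ln (real j)) powr e"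
    using mj mj' m b1 e by (intro mult_mono powr_mono2) auto
  have C: "(3 * ln (real j)) powr b1 * (3 * ln (real j)) powr e = 3 powr (b1 + e) * ln (real j) powr (b1 + e)"
    using L by (simp add: powr_add powr_mult)
  have D: "(2^m) powr a \<le> real j powr a * (3 powr (b1 + e) * ln (real j) powr (b1 + e))"
  proof -
    have "1 \<le> (3 * ln (real j)) powr (b1 + e)" using L b1 e by (simp add: ge_one_powr_ge_zero)
    then have "1 \<le> 3 powr (b1 + e) * ln (real j) powr (b1 + e)" using L by (simp add: powr_mult)
    then have "real j powr a * 1 \<le> real j powr a * (3 powr (b1 + e) * ln (real j) powr (b1 + e))"
      by (intro mult_left_mono) auto
    then show ?thesis using ja by simp
  qed
  have B': "(real m + 1) powr b1 * real m powr e \<le> 3 powr (b1 + e) * ln (real j) powr (b1 + e)"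
    using B C by simp
  have "(2^(m+1)) powr a * ((real m + 1) powr b1 * real m powr e)
      \<le> (2 powr a * real j powr a) * (3 powr (b1 + e) * ln (real j) powr (b1 + e))"
    by (rule mult_mono[OF A B']) auto
  then have "(2^(m+1)) powr a * (real m + 1) powr b1 * real m powr e
      \<le> (2 powr a * real j powr a) * (3 powr (b1 + e) * ln (real j) powr (b1 + e))"
    by (simp add: mult.assoc)
  with D show ?thesis by (simp add: algebra_simps)
qed

lemma det_part:
  fixes Y :: "nat \<Rightarrow> real" and L :: "nat \<Rightarrow> nat" and T :: "nat \<Rightarrow> real" and a :: real
  assumes m1: "m1 \<ge> 1"
    and Lm: "\<And>m. m \<ge> m1 \<Longrightarrow> L m \<le> m"
    and good: "\<And>m. m \<ge> m1 \<Longrightarrow> (\<forall>q\<le>2^(L m). \<bar>Y (2^m + q*2^(m - L m))\<bar> \<le> T m) \<and>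
        (\<forall>l < m - L m. \<forall>i<2^(m-l). \<bar>Y (2^m+(i+1)*2^l) - Y (2^m+i*2^l)\<bar> \<le> (2^m) powr a / real m)"
    and j: "j \<ge> 2^m1"
  shows "\<bar>Y j\<bar> \<le> T (floor_log j) + (2^floor_log j) powr a"
proof -
  define m where "m = floor_log j"
  have j0: "j > 0" by (rule less_le_trans[OF _ j]) simp
  have m2: "2^m \<le> j" unfolding m_def using j0 by (rule floor_log_exp2_le)
  have m3: "j < 2 * 2^m" unfolding m_def by (rule floor_log_exp2_gt)
  have "floor_log (2^m1) \<le> floor_log j" using j by (rule floor_log_le_iff)
  then have mm1: "m \<ge> m1" by (simp add: m_def)
  have m1': "m \<ge> 1" using mm1 m1 by simp
  define Lm where "Lm = L m"
  define r where "r = m - Lm"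
  have LL: "Lm \<le> m" using Lm[OF mm1] by (simp add: Lm_def)
  have pm: "(2::nat)^m = 2^Lm * 2^r" using LL by (simp add: r_def power_add[symmetric])
  define x where "x = j - 2^m"
  have x: "x < 2^Lm * 2^r" using m2 m3 pm by (simp add: x_def)
  define q where "q = x div 2^r"
  define y where "y = x mod 2^r"
  have q: "q < 2^Lm" unfolding q_def using x by (simp add: less_mult_imp_div_less)
  have y: "y < 2^r" unfolding y_def by simp
  define g where "g = 2^m + q * 2^r"
  have "x = q * 2^r + y" unfolding q_def y_def by (rule div_mult_mod_eq[symmetric])
  then have jg: "j = g + y" using m2 unfolding g_def x_def by simp
  have G: "(\<forall>q\<le>2^Lm. \<bar>Y (2^m + q*2^r)\<bar> \<le> T m) \<and>
        (\<forall>l < r. \<forall>i<2^(m-l). \<bar>Y (2^m+(i+1)*2^l) - Y (2^m+i*2^l)\<bar> \<le> (2^m) powr a / real m)"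
    using good[OF mm1] by (simp add: Lm_def r_def)
  have Yg: "\<bar>Y g\<bar> \<le> T m" using G q unfolding g_def by simp
  have hyp: "\<forall>l<r. \<forall>i<2^(r-l). \<bar>Y (g + (i+1)*2^l) - Y (g + i*2^l)\<bar> \<le> (2^m) powr a / real m"
  proof (intro allI impI)
    fix l i assume l: "l < r" and i: "i < (2::nat)^(r-l)"
    define i' where "i' = q * 2^(r-l) + i"
    have pr: "(2::nat)^r = 2^(r-l) * 2^l" using l by (simp add: power_add[symmetric])
    have pml: "(2::nat)^(m-l) = 2^Lm * 2^(r-l)" using l LL by (simp add: r_def power_add[symmetric])
    have "i' < (q + 1) * 2^(r-l)" using i by (simp add: i'_def)
    also have "\<dots> \<le> 2^Lm * 2^(r-l)" using q by (intro mult_right_mono) auto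
    finally have i': "i' < 2^(m-l)" using pml by simp
    have e1: "g + (i+1)*2^l = 2^m + (i'+1)*2^l" unfolding g_def i'_def pr by (simp add: algebra_simps)
    have e2: "g + i*2^l = 2^m + i'*2^l" unfolding g_def i'_def pr by (simp add: algebra_simps)
    show "\<bar>Y (g + (i+1)*2^l) - Y (g + i*2^l)\<bar> \<le> (2^m) powr a / real m"
      unfolding e1 e2 using G l i' by blast
  qed
  have "\<bar>(\<lambda>z. Y (g + z)) y - (\<lambda>z. Y (g + z)) 0\<bar> \<le> (\<Sum>l<r. (2^m) powr a / real m)"
    by (rule chain_bound[where d="\<lambda>_. (2^m) powr a / real m"]) (use hyp y in auto)
  also have "\<dots> = real r * ((2^m) powr a / real m)" by simp
  also have "\<dots> \<le> real m * ((2^m) powr a / real m)" by (intro mult_right_mono) (auto simp: r_def)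
  also have "\<dots> = (2^m) powr a" using m1' by simp
  finally have "\<bar>Y j - Y g\<bar> \<le> (2^m) powr a" using jg by simp
  with Yg show ?thesis unfolding m_def by linarith
qed

lemma ev_L: "eventually (\<lambda>m. K * floor_log m \<le> m) sequentially"
proof -
  have "eventually (\<lambda>m::nat. real K * log 2 (real m) \<le> real m) sequentially"
    by real_asymp
  moreover have "eventually (\<lambda>m::nat. m > 0) sequentially" by (rule eventually_gt_at_top)
  ultimately show ?thesis
  proof eventually_elim
    case (elim m)
    have "2 ^ floor_log m \<le> m" using elim(2) by (rule floor_log_exp2_le)
    then have "real (2 ^ floor_log m) \<le> real m" by linarith
    then have "log 2 (2 ^ floor_log m) \<le> log 2 (real m)" using elim(2) by (subst log_le_cancel_iff) auto
    then have "real (floor_log m) \<le> log 2 (real m)" by (simp add: log_nat_power)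
    then have "real K * real (floor_log m) \<le> real K * log 2 (real m)" by (intro mult_left_mono) auto
    with elim(1) have "real (K * floor_log m) \<le> real m" by simp
    then show ?case by linarith
  qed
qed

lemma params:
  fixes a b2 e :: real
  assumes a: "0 < a" "a \<le> 1" and b2: "0 \<le> b2" and e: "0 < e"
  shows "\<exists>K::nat. \<exists>p. p > 1 \<and> e * p = real K + 2 \<and> a * p \<ge> 1 \<and> real K * (a * p - 1) \<ge> (b2 + 1) * p + 3"
proof -
  define z where "z = 2*b2 + 2 + 8*e"
  have z0: "z > 0" using b2 e by (simp add: z_def)
  define K :: nat where "K = nat \<lceil>z / a\<rceil>"
  define p where "p = (real K + 2) / e"
  have Kge: "real K \<ge> z / a" unfolding K_def by (rule real_nat_ceiling_ge)
  have aK: "a * real K \<ge> z" using Kge a by (simp add: field_simps)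
  have "z * a \<le> z" using a z0 by (intro mult_left_le) auto
  then have "z \<le> z / a" using a by (simp add: le_divide_eq)
  then have Kz: "real K \<ge> z" using Kge by linarith
  have ep: "e * p = real K + 2" using e by (simp add: p_def)
  have p1: "p > 1" using Kz e b2 by (simp add: p_def z_def field_simps)
  have "a * p * e = a * (real K + 2)" using ep by (simp add: algebra_simps)
  also have "\<dots> \<ge> z" using aK a by (simp add: algebra_simps)
  finally have ape: "a * p * e \<ge> z" .
  have "8 * e \<le> z" using b2 by (simp add: z_def)
  with ape have "8 * e \<le> a * p * e" by linarith
  then have ap8: "a * p \<ge> 8" using e by simp
  have "real K * (a * p - 1) \<ge> real K * (a * p / 2)" using ap8 by (intro mult_left_mono) auto
  moreover have "real K * (a * p / 2) = (a * real K) * p / 2" by simp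
  moreover have "(a * real K) * p / 2 \<ge> z * p / 2" using aK p1 by (intro divide_right_mono mult_right_mono) auto
  moreover have "z * p / 2 = (b2 + 1) * p + 4 * (e * p)" by (simp add: z_def algebra_simps)
  moreover have "4 * (e * p) \<ge> 3" using ep by simp
  ultimately have "real K * (a * p - 1) \<ge> (b2 + 1) * p + 3" by linarith
  then show ?thesis using p1 ep ap8 by (intro exI[of _ K] exI[of _ p]) auto
qed

lemma set_meas1:
  fixes f :: "'a \<Rightarrow> real"
  assumes [measurable]: "f \<in> borel_measurable M"
  shows "{\<omega>\<in>space M. d < \<bar>f \<omega>\<bar>} \<in> sets M"
  by measurable

lemma set_meas2:
  fixes f g :: "'a \<Rightarrow> real"
  assumes [measurable]: "f \<in> borel_measurable M" "g \<in> borel_measurable M"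
  shows "{\<omega>\<in>space M. d < \<bar>f \<omega> - g \<omega>\<bar>} \<in> sets M"
  by measurable

lemma int_chain:
  fixes M :: "'w measure" and Y :: "nat \<Rightarrow> 'w \<Rightarrow> real" and a b1 b2 \<epsilon> :: real and N0 :: nat
  assumes P: "prob_space M" and Ym: "\<And>n. N0 \<le> n \<Longrightarrow> Y n \<in> borel_measurable M"
    and a: "0 < a" "a \<le> 1" and b1: "0 \<le> b1" and b2: "0 \<le> b2" and e: "0 < \<epsilon>" and N0: "2 \<le> N0"
    and mom: "\<forall>p>1. \<exists>c>0. (\<forall>n\<ge>N0. Lp_norm M p (Y n) \<le> ennreal (c * real n powr a * ln (real n) powr b1)) \<and>
        (\<forall>i j. N0 \<le> i \<and> i < j \<longrightarrow> Lp_norm M p (\<lambda>\<omega>. Y j \<omega> - Y i \<omega>) \<le> ennreal (c * (real j - real i) powr a * ln (real j) powr b2))"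
  shows "AE \<omega> in M. \<exists>C. eventually (\<lambda>j. \<bar>Y j \<omega>\<bar> \<le> C * real j powr a * ln (real j) powr (b1 + \<epsilon>)) sequentially"
proof -
  interpret prob_space M by fact
  obtain K :: nat and p where p1: "p > 1" and ep: "\<epsilon> * p = real K + 2" and ap: "a * p \<ge> 1"
    and ex: "real K * (a * p - 1) \<ge> (b2 + 1) * p + 3"
    using params[OF a b2 e] by blast
  obtain c where c: "c > 0"
    and mom1: "\<And>n. n \<ge> N0 \<Longrightarrow> Lp_norm M p (Y n) \<le> ennreal (c * real n powr a * ln (real n) powr b1)"
    and mom2: "\<And>i j. N0 \<le> i \<Longrightarrow> i < j \<Longrightarrow> Lp_norm M p (\<lambda>\<omega>. Y j \<omega> - Y i \<omega>) \<le> ennreal (c * (real j - real i) powr a * ln (real j) powr b2)"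
    using mom p1 by blast
  define L where "L m = K * floor_log m" for m
  define T where "T m = (2^(m+1)) powr a * (real m + 1) powr b1 * real m powr \<epsilon>" for m :: nat
  define D where "D m = (2^m) powr a / real m" for m :: nat
  have "eventually (\<lambda>m. 1 \<le> m \<and> N0 \<le> m \<and> L m \<le> m) sequentially"
    unfolding L_def by (intro eventually_conj ev_L eventually_ge_at_top)
  then obtain m0 where m0': "\<And>m. m \<ge> m0 \<Longrightarrow> 1 \<le> m \<and> N0 \<le> m \<and> L m \<le> m"
    by (auto simp: eventually_sequentially)
  have m0: "1 \<le> m" "N0 \<le> 2^m" "L m \<le> m" if "m \<ge> m0" for m
  proof -
    show "1 \<le> m" "L m \<le> m" using m0'[OF that] by auto
    have "m < 2^m" by (rule less_exp)
    then show "N0 \<le> 2^m" using m0'[OF that] by linarith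
  qed
  define A where "A m = (\<Union>q\<in>{..2^L m}. {\<omega>\<in>space M. T m < \<bar>Y (2^m + q*2^(m - L m)) \<omega>\<bar>})" for m
  define B where "B m = (\<Union>li\<in>Sigma {..<m - L m} (\<lambda>l. {..<(2::nat)^(m-l)}).
     {\<omega>\<in>space M. D m < \<bar>Y (2^m+(snd li+1)*2^(fst li)) \<omega> - Y (2^m+snd li*2^(fst li)) \<omega>\<bar>})" for m
  define E where "E m = (if m0 \<le> m then A m \<union> B m else {})" for m
  have Asets: "(\<lambda>q. {\<omega>\<in>space M. T m < \<bar>Y (2^m + q*2^(m - L m)) \<omega>\<bar>}) ` {..2^L m} \<subseteq> events"
    if "m \<ge> m0" for m
    using m0[OF that] by (auto intro!: set_meas1 Ym)
  have Bsets: "(\<lambda>li. {\<omega>\<in>space M. D m < \<bar>Y (2^m+(snd li+1)*2^(fst li)) \<omega> - Y (2^m+snd li*2^(fst li)) \<omega>\<bar>})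
      ` Sigma {..<m - L m} (\<lambda>l. {..<(2::nat)^(m-l)}) \<subseteq> events"
    if "m \<ge> m0" for m
    using m0[OF that] by (auto intro!: set_meas2 Ym)
  have Em: "E m \<in> events" for m
  proof (cases "m0 \<le> m")
    case True
    have "A m \<in> events" unfolding A_def using Asets[OF True] by (intro sets.finite_UN) auto
    moreover have "B m \<in> events" unfolding B_def using Bsets[OF True] by (intro sets.finite_UN) auto
    ultimately show ?thesis using True by (simp add: E_def)
  qed (simp add: E_def)
  define C1 where "C1 = 2 * c powr p + c powr p * 2 powr (b2 * p) * 2 powr (real K * (a * p - 1))"
  have Ebound: "prob (E m) \<le> C1 * real m powr (-2)" if mm: "m \<ge> m0" for m
  proof -
    note mp = m0[OF mm]
    define Lm where "Lm = L m"
    define r where "r = m - Lm"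
    define F where "F = (c * real m * (real m + 1) powr b2) powr p"
    have x1: "real m \<ge> 1" using mp by simp
    have m0': "m > 0" using mp by simp
    define y :: real where "y = 2^Lm"
    have y2: "y = (2 ^ floor_log m) ^ K" unfolding y_def Lm_def L_def
      by (simp add: power_mult[symmetric] mult.commute)
    have "2 ^ floor_log m \<le> m" using m0' by (rule floor_log_exp2_le)
    then have "real (2 ^ floor_log m) \<le> real m" by (simp only: of_nat_le_iff)
    then have "(2::real) ^ floor_log m \<le> real m" by simp
    then have "y \<le> real m ^ K" unfolding y2 by (intro power_mono) auto
    then have y_up: "y \<le> real m powr real K" using m0' by (simp add: powr_realpow)
    have "m < 2 * 2 ^ floor_log m" by (rule floor_log_exp2_gt)
    then have "real m < real (2 * 2 ^ floor_log m)" by (simp only: of_nat_less_iff)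
    then have "real m < 2 * 2 ^ floor_log m" by simp
    then have "(real m / 2) ^ K \<le> y" unfolding y2 by (intro power_mono) auto
    then have y_lo: "(real m / 2) powr real K \<le> y" using m0' by (simp add: powr_realpow)
    have y0: "y > 0" by (simp add: y_def)
    have PA: "prob (A m) \<le> (y + 1) * (c powr p * real m powr (- \<epsilon> * p))"
    proof -
      have "prob (A m) \<le> (\<Sum>q\<in>{..2^Lm}. prob {\<omega>\<in>space M. T m < \<bar>Y (2^m + q*2^(m - L m)) \<omega>\<bar>})"
        unfolding A_def Lm_def using Asets[OF mm] by (intro finite_measure_subadditive_finite) auto
      also have "\<dots> \<le> (\<Sum>q\<in>{..(2::nat)^Lm}. c powr p * real m powr (- \<epsilon> * p))"
      proof (intro sum_mono)
        fix q :: nat assume q: "q \<in> {..2^Lm}"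
        define g where "g = 2^m + q*2^(m - L m)"
        have "q * 2^(m - L m) \<le> (2::nat)^Lm * 2^(m - Lm)" using q unfolding Lm_def by (intro mult_right_mono) auto
        also have "\<dots> = 2^m" using mp by (simp add: Lm_def power_add[symmetric])
        finally have g1: "g \<le> 2^(m+1)" by (simp add: g_def)
        have g2: "N0 \<le> g" using mp by (simp add: g_def)
        show "prob {\<omega>\<in>space M. T m < \<bar>Y (2^m + q*2^(m - L m)) \<omega>\<bar>} \<le> c powr p * real m powr (- \<epsilon> * p)"
          unfolding T_def g_def[symmetric]
          by (rule coarse_prob[OF P Ym[OF g2] _ c a(1) b1 _ g1 _ mom1[OF g2]]) (use p1 N0 g2 mp in auto)
      qed
      also have "\<dots> = (y + 1) * (c powr p * real m powr (- \<epsilon> * p))" by (simp add: y_def)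
      finally show ?thesis .
    qed
    have PB: "prob (B m) \<le> real m * (F * y powr (1 - a * p))"
    proof -
      have "prob (B m) \<le> (\<Sum>li\<in>Sigma {..<r} (\<lambda>l. {..<(2::nat)^(m-l)}). prob {\<omega>\<in>space M. D m < \<bar>Y (2^m+(snd li+1)*2^(fst li)) \<omega> - Y (2^m+snd li*2^(fst li)) \<omega>\<bar>})"
        unfolding B_def r_def Lm_def using Bsets[OF mm] by (intro finite_measure_subadditive_finite) auto
      also have "\<dots> \<le> (\<Sum>li\<in>Sigma {..<r} (\<lambda>l. {..<(2::nat)^(m-l)}). F * 2 powr (- (real (m - fst li) * a * p)))"
      proof (intro sum_mono)
        fix li assume li: "li \<in> Sigma {..<r} (\<lambda>l. {..<(2::nat)^(m-l)})"
        obtain l i where lieq: "li = (l, i)" by (cases li)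
        have l: "l < r" and i: "i < (2::nat)^(m-l)" using li lieq by auto
        define s where "s = 2^m + i*2^l"
        define t where "t = 2^m + (i+1)*2^l"
        have "(i+1) * 2^l \<le> (2::nat)^(m-l) * 2^l" using i by (intro mult_right_mono) auto
        also have "\<dots> = 2^m" using l by (simp add: r_def power_add[symmetric])
        finally have t1: "t \<le> 2^(m+1)" by (simp add: t_def)
        have ts: "t = s + 2^l" by (simp add: s_def t_def algebra_simps)
        have s2: "N0 \<le> s" using mp by (simp add: s_def)
        have st: "s < t" using ts by simp
        show "prob {\<omega>\<in>space M. D m < \<bar>Y (2^m+(snd li+1)*2^(fst li)) \<omega> - Y (2^m+snd li*2^(fst li)) \<omega>\<bar>}
            \<le> F * 2 powr (- (real (m - fst li) * a * p))"
          unfolding lieq D_def F_def fst_conv snd_conv s_def[symmetric] t_def[symmetric]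
          by (rule fine_prob[OF P _ _ c a(1) b2 _ ts t1 _ _ mom2[OF s2 st]])
             (use p1 N0 s2 mp l Ym s2 st in \<open>auto simp: r_def intro!: borel_measurable_diff\<close>)
      qed
      also have "\<dots> = (\<Sum>l<r. \<Sum>i<(2::nat)^(m-l). F * 2 powr (- (real (m - l) * a * p)))"
        by (subst sum.Sigma) (auto simp: case_prod_beta)
      also have "\<dots> = (\<Sum>l<r. (2::real)^(m-l) * (F * 2 powr (- (real (m - l) * a * p))))" by simp
      also have "\<dots> \<le> (\<Sum>l<r. F * y powr (1 - a * p))"
      proof (intro sum_mono)
        fix l assume l: "l \<in> {..<r}"
        have "(2::real)^(m-l) * 2 powr (- (real (m - l) * a * p)) = 2 powr (real (m - l) * (1 - a * p))"
          by (simp add: powr_realpow[symmetric] powr_add[symmetric] algebra_simps)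
        also have "\<dots> \<le> 2 powr (real Lm * (1 - a * p))"
          using l ap by (intro powr_mono mult_right_mono_neg) (auto simp: r_def)
        also have "\<dots> = y powr (1 - a * p)" by (simp add: y_def powr_realpow[symmetric] powr_powr)
        finally have "(2::real)^(m-l) * 2 powr (- (real (m - l) * a * p)) \<le> y powr (1 - a * p)" .
        moreover have "F \<ge> 0" by (simp add: F_def)
        ultimately show "2^(m-l) * (F * 2 powr (- (real (m - l) * a * p))) \<le> F * y powr (1 - a * p)"
          by (metis mult.left_commute mult_left_mono mult.commute)
      qed
      also have "\<dots> = real r * (F * y powr (1 - a * p))" by simp
      also have "\<dots> \<le> real m * (F * y powr (1 - a * p))"
        by (intro mult_right_mono) (auto simp: r_def F_def)
      finally show ?thesis .
    qed
    have "prob (E m) \<le> prob (A m) + prob (B m)"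
      using mm Asets[OF mm] Bsets[OF mm] unfolding E_def A_def B_def
      by (auto intro!: measure_Un_le sets.finite_UN)
    also have "\<dots> \<le> 2 * c powr p * real m powr (-2) + (c powr p * 2 powr (b2 * p) * 2 powr (real K * (a * p - 1))) * real m powr (-2)"
    proof (intro add_mono order.trans[OF PA] order.trans[OF PB])
      show "(y + 1) * (c powr p * real m powr (- \<epsilon> * p)) \<le> 2 * c powr p * real m powr (-2)"
        by (rule arith_coarse[OF x1 y_up _ ep c]) simp
      show "real m * (F * y powr (1 - a * p)) \<le> (c powr p * 2 powr (b2 * p) * 2 powr (real K * (a * p - 1))) * real m powr (-2)"
        unfolding F_def by (rule arith_fine[OF x1 y_lo _ c b2 ap _ ex]) (use p1 in auto)
    qed
    also have "\<dots> = C1 * real m powr (-2)" by (simp add: C1_def algebra_simps)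
    finally show ?thesis .
  qed
  have summ: "summable (\<lambda>m. prob (E m))"
  proof (rule summable_comparison_test')
    show "summable (\<lambda>m. C1 * real m powr (-2))"
      by (intro summable_mult) (simp add: summable_real_powr_iff)
    show "norm (prob (E m)) \<le> C1 * real m powr (-2)" if "m \<ge> m0" for m
      using Ebound[OF that] by simp
  qed
  have BC: "AE \<omega> in M. eventually (\<lambda>m. \<omega> \<in> space M - E m) sequentially"
    by (rule borel_cantelli_AE1) (use Em summ in \<open>auto simp: less_top[symmetric]\<close>)
  define C where "C = (2 powr a + 1) * 3 powr (b1 + \<epsilon>)"
  show ?thesis
  proof (rule AE_mp[OF BC AE_I2], intro impI)
    fix \<omega> assume \<omega>: "\<omega> \<in> space M" and ev: "eventually (\<lambda>m. \<omega> \<in> space M - E m) sequentially"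
    then obtain m2 where m2: "\<And>m. m \<ge> m2 \<Longrightarrow> \<omega> \<notin> E m" by (auto simp: eventually_sequentially)
    define m1 where "m1 = max (max m0 m2) 1"
    have good: "(\<forall>q\<le>2^(L m). \<bar>Y (2^m + q*2^(m - L m)) \<omega>\<bar> \<le> T m) \<and>
        (\<forall>l < m - L m. \<forall>i<2^(m-l). \<bar>Y (2^m+(i+1)*2^l) \<omega> - Y (2^m+i*2^l) \<omega>\<bar> \<le> (2^m) powr a / real m)"
      if "m \<ge> m1" for m
    proof -
      have "m \<ge> m0" "m \<ge> m2" using that by (auto simp: m1_def)
      then have "\<omega> \<notin> E m" using m2 by blast
      then have "\<omega> \<notin> A m \<union> B m" using \<open>m \<ge> m0\<close> by (simp add: E_def)
      then show ?thesis using \<omega> unfolding A_def B_def D_def by force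
    qed
    have "\<bar>Y j \<omega>\<bar> \<le> C * real j powr a * ln (real j) powr (b1 + \<epsilon>)" if j: "j \<ge> 2^m1" for j
    proof -
      have "\<bar>Y j \<omega>\<bar> \<le> T (floor_log j) + (2^floor_log j) powr a"
        by (rule det_part[where Y="\<lambda>n. Y n \<omega>" and L=L]) (use good j m0 in \<open>auto simp: m1_def\<close>)
      also have "\<dots> \<le> C * real j powr a * ln (real j) powr (b1 + \<epsilon>)"
      proof -
        have j0: "j > 0" by (rule less_le_trans[OF _ j]) simp
        have "floor_log (2^m1) \<le> floor_log j" using j by (rule floor_log_le_iff)
        then have "floor_log j \<ge> 1" by (simp add: m1_def)
        moreover have "2^floor_log j \<le> j" using j0 by (rule floor_log_exp2_le)
        ultimately show ?thesis unfolding T_def C_def using a b1 e by (intro arith_final) auto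
      qed
      finally show ?thesis .
    qed
    then show "\<exists>C. eventually (\<lambda>j. \<bar>Y j \<omega>\<bar> \<le> C * real j powr a * ln (real j) powr (b1 + \<epsilon>)) sequentially"
      by (auto simp: eventually_sequentially)
  qed
qed

lemma sup_part:
  fixes M :: "'w measure" and Z :: "nat \<Rightarrow> 'w \<Rightarrow> ennreal" and a c :: real and N0 :: nat
  assumes P: "prob_space M" and a: "0 < a" "a \<le> 1" and c: "c > 0" and N0: "1 \<le> N0"
    and Zm: "\<And>j. N0 \<le> j \<Longrightarrow> Z j \<in> borel_measurable M"
    and Zb: "\<And>j. N0 \<le> j \<Longrightarrow> Lp_norm_enn M (4 / a) (Z j) \<le> ennreal (c * real j powr (a / 2))"
  shows "AE \<omega> in M. eventually (\<lambda>j. Z j \<omega> \<le> ennreal (real j powr a)) sequentially"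
proof -
  interpret prob_space M by fact
  define F where "F j = (if N0 \<le> j then {\<omega>\<in>space M. Z j \<omega> > ennreal (real j powr a)} else {})" for j
  have Fm: "F j \<in> events" for j
  proof (cases "N0 \<le> j")
    case True
    have [measurable]: "Z j \<in> borel_measurable M" using Zm[OF True] .
    show ?thesis using True unfolding F_def by simp measurable
  qed (simp add: F_def)
  have Fb: "prob (F j) \<le> c powr (4 / a) * real j powr (-2)" if j: "j \<ge> N0" for j
  proof -
    have j0: "real j > 0" using j N0 by simp
    have "F j = {\<omega>\<in>space M. Z j \<omega> > ennreal (real j powr a)}" using j by (simp add: F_def)
    moreover have "prob {\<omega>\<in>space M. Z j \<omega> > ennreal (real j powr a)} \<le> (c * real j powr (a / 2) / real j powr a) powr (4 / a)"
      using j j0 a c by (intro markov_Lp[OF P Zm[OF j] _ _ _ Zb[OF j]]) auto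
    ultimately have "prob (F j) \<le> (c * real j powr (a / 2) / real j powr a) powr (4 / a)" by simp
    also have "c * real j powr (a / 2) / real j powr a = c * real j powr (- (a / 2))"
    proof -
      have "real j powr (a / 2) * real j powr (a / 2) = real j powr a"
        by (simp add: powr_add[symmetric])
      then show ?thesis using j0 by (simp add: powr_minus_divide divide_simps)
    qed
    also have "(c * real j powr (- (a / 2))) powr (4 / a) = c powr (4 / a) * real j powr (-2)"
      using j0 c a by (simp add: powr_mult powr_powr)
    finally show ?thesis .
  qed
  have summ: "summable (\<lambda>j. prob (F j))"
  proof (rule summable_comparison_test')
    show "summable (\<lambda>j. c powr (4 / a) * real j powr (-2))"
      by (intro summable_mult) (simp add: summable_real_powr_iff)
    show "norm (prob (F j)) \<le> c powr (4 / a) * real j powr (-2)" if "j \<ge> N0" for j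
      using Fb[OF that] by simp
  qed
  have BC: "AE \<omega> in M. eventually (\<lambda>j. \<omega> \<in> space M - F j) sequentially"
    by (rule borel_cantelli_AE1) (use Fm summ in \<open>auto simp: less_top[symmetric]\<close>)
  show ?thesis
  proof (rule AE_mp[OF BC AE_I2], intro impI)
    fix \<omega> assume \<omega>: "\<omega> \<in> space M" and ev: "eventually (\<lambda>j. \<omega> \<in> space M - F j) sequentially"
    have "eventually (\<lambda>j. \<omega> \<in> space M - F j \<and> j \<ge> N0) sequentially"
      using ev eventually_ge_at_top by (rule eventually_conj)
    then show "eventually (\<lambda>j. Z j \<omega> \<le> ennreal (real j powr a)) sequentially"
      by eventually_elim (use \<omega> in \<open>auto simp: F_def not_less\<close>)
  qed
qed

lemma small_o_step:
  fixes f :: "real \<Rightarrow> real" and a b e C :: real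
  assumes e: "e > 0" and ev: "eventually (\<lambda>t. \<bar>f t\<bar> \<le> C * t powr a * ln t powr (b + e / 2)) at_top"
  shows "f \<in> o[at_top](\<lambda>t. t powr a * ln t powr (b + e))"
proof (rule landau_o.smallI)
  fix d :: real assume d: "d > 0"
  have "eventually (\<lambda>t. ln t powr (e / 2) \<ge> (\<bar>C\<bar> + 1) / d) at_top"
    using e by real_asymp
  moreover have "eventually (\<lambda>t::real. t > 1) at_top" by (rule eventually_gt_at_top)
  ultimately show "eventually (\<lambda>t. norm (f t) \<le> d * norm (t powr a * ln t powr (b + e))) at_top"
    using ev
  proof eventually_elim
    case (elim t)
    have l0: "ln t > 0" using elim(2) by simp
    have "\<bar>f t\<bar> \<le> C * t powr a * ln t powr (b + e / 2)" using elim(3) .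
    also have "\<dots> \<le> (\<bar>C\<bar> + 1) * (t powr a * ln t powr (b + e / 2))"
      by (simp add: mult.assoc mult_right_mono)
    also have "\<dots> \<le> (d * ln t powr (e / 2)) * (t powr a * ln t powr (b + e / 2))"
      using elim(1) d by (intro mult_right_mono) (auto simp: field_simps)
    also have "\<dots> = d * (t powr a * ln t powr (b + e))"
      using l0 by (simp add: powr_add[symmetric] algebra_simps)
    finally show ?case using elim(2) l0 d by simp
  qed
qed

theorem proposition2p2:
  fixes M :: "'w measure" and X :: "real \<Rightarrow> 'w \<Rightarrow> real"
    and a b1 b2 :: real
  assumes "prob_space M"
    and meas: "\<And>t. t > 0 \<Longrightarrow> X t \<in> borel_measurable M"
    and "0 < a" "a \<le> 1" "0 \<le> b1" "b1 \<le> b2"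
    and bounds: "\<exists>t0 > 1. 
      (\<forall>t > t0. (\<lambda>\<omega>. SUP u\<in>{t..t+1}. ennreal \<bar>X u \<omega> - X t \<omega>\<bar>) \<in> borel_measurable M) \<and>
      (\<forall>p > 1. \<exists>c > 0.
        (\<forall>t > t0. Lp_norm M p (X t) \<le> ennreal (c * t powr a * ln t powr b1)) \<and>
        (\<forall>s t. t0 \<le> s \<and> s \<le> t - 1 \<longrightarrow>
            Lp_norm M p (\<lambda>\<omega>. X t \<omega> - X s \<omega>) \<le> ennreal (c * (t - s) powr a * ln t powr b2)) \<and>
        (\<forall>t > t0. Lp_norm_enn M p (\<lambda>\<omega>. SUP u\<in>{t..t+1}. ennreal \<bar>X u \<omega> - X t \<omega>\<bar>)
              \<le> ennreal (c * t powr (a / 2))))"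
  shows "\<forall>\<epsilon> > 0. AE \<omega> in M.
           (\<lambda>t. X t \<omega>) \<in> o[at_top](\<lambda>t. t powr a * ln t powr (b1 + \<epsilon>))"
proof (intro allI impI)
  fix \<epsilon> :: real assume e: "\<epsilon> > 0"
  note P = assms(1)
  note a0 = assms(3) and a1 = assms(4) and b1 = assms(5) and b12 = assms(6)
  interpret prob_space M by fact
  obtain t0 where t0: "t0 > 1"
    and supm: "\<And>t. t > t0 \<Longrightarrow> (\<lambda>\<omega>. SUP u\<in>{t..t+1}. ennreal \<bar>X u \<omega> - X t \<omega>\<bar>) \<in> borel_measurable M"
    and H: "\<forall>p > 1. \<exists>c > 0.
        (\<forall>t > t0. Lp_norm M p (X t) \<le> ennreal (c * t powr a * ln t powr b1)) \<and>
        (\<forall>s t. t0 \<le> s \<and> s \<le> t - 1 \<longrightarrow>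
            Lp_norm M p (\<lambda>\<omega>. X t \<omega> - X s \<omega>) \<le> ennreal (c * (t - s) powr a * ln t powr b2)) \<and>
        (\<forall>t > t0. Lp_norm_enn M p (\<lambda>\<omega>. SUP u\<in>{t..t+1}. ennreal \<bar>X u \<omega> - X t \<omega>\<bar>)
              \<le> ennreal (c * t powr (a / 2)))"
    using bounds by blast
  define N0 :: nat where "N0 = nat \<lceil>t0\<rceil> + 2"
  have "t0 \<le> real (nat \<lceil>t0\<rceil>)" by (rule real_nat_ceiling_ge)
  then have N0t: "real N0 \<ge> t0 + 2" by (simp add: N0_def)
  have N02: "N0 \<ge> 2" by (simp add: N0_def)
  have e2: "\<epsilon> / 2 > 0" using e by simp
  have AE1: "AE \<omega> in M. \<exists>C. eventually (\<lambda>j. \<bar>(\<lambda>n. X (real n)) j \<omega>\<bar> \<le> C * real j powr a * ln (real j) powr (b1 + \<epsilon> / 2)) sequentially"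
  proof (rule int_chain[OF P _ a0 a1 b1 _ e2 N02])
    show "\<And>n. N0 \<le> n \<Longrightarrow> (\<lambda>n. X (real n)) n \<in> borel_measurable M"
      using N02 by (intro meas) simp
    show "0 \<le> b2" using b1 b12 by simp
    show "\<forall>p>1. \<exists>c>0. (\<forall>n\<ge>N0. Lp_norm M p ((\<lambda>n. X (real n)) n) \<le> ennreal (c * real n powr a * ln (real n) powr b1)) \<and>
        (\<forall>i j. N0 \<le> i \<and> i < j \<longrightarrow> Lp_norm M p (\<lambda>\<omega>. (\<lambda>n. X (real n)) j \<omega> - (\<lambda>n. X (real n)) i \<omega>) \<le> ennreal (c * (real j - real i) powr a * ln (real j) powr b2))"
    proof (intro allI impI)
      fix p :: real assume p: "p > 1"
      then obtain c where c: "c > 0"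
        and h1: "\<forall>t > t0. Lp_norm M p (X t) \<le> ennreal (c * t powr a * ln t powr b1)"
        and h2: "\<forall>s t. t0 \<le> s \<and> s \<le> t - 1 \<longrightarrow>
            Lp_norm M p (\<lambda>\<omega>. X t \<omega> - X s \<omega>) \<le> ennreal (c * (t - s) powr a * ln t powr b2)"
        using H by blast
      have "\<forall>n\<ge>N0. Lp_norm M p (X (real n)) \<le> ennreal (c * real n powr a * ln (real n) powr b1)"
      proof (intro allI impI)
        fix n assume "N0 \<le> n"
        then have "real n > t0" using N0t by (smt (verit) of_nat_le_iff)
        then show "Lp_norm M p (X (real n)) \<le> ennreal (c * real n powr a * ln (real n) powr b1)" using h1 by blast
      qed
      moreover have "\<forall>i j. N0 \<le> i \<and> i < j \<longrightarrow> Lp_norm M p (\<lambda>\<omega>. X (real j) \<omega> - X (real i) \<omega>) \<le> ennreal (c * (real j - real i) powr a * ln (real j) powr b2)"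
      proof (intro allI impI)
        fix i j :: nat assume ij: "N0 \<le> i \<and> i < j"
        then have "t0 \<le> real i" using N0t by (smt (verit) of_nat_le_iff)
        moreover have "real i \<le> real j - 1" using ij by linarith
        ultimately show "Lp_norm M p (\<lambda>\<omega>. X (real j) \<omega> - X (real i) \<omega>) \<le> ennreal (c * (real j - real i) powr a * ln (real j) powr b2)"
          using h2 by blast
      qed
      ultimately show "\<exists>c>0. (\<forall>n\<ge>N0. Lp_norm M p ((\<lambda>n. X (real n)) n) \<le> ennreal (c * real n powr a * ln (real n) powr b1)) \<and>
        (\<forall>i j. N0 \<le> i \<and> i < j \<longrightarrow> Lp_norm M p (\<lambda>\<omega>. (\<lambda>n. X (real n)) j \<omega> - (\<lambda>n. X (real n)) i \<omega>) \<le> ennreal (c * (real j - real i) powr a * ln (real j) powr b2))"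
        using c by auto
    qed
  qed
  define Z where "Z j \<omega> = (SUP u\<in>{real j..real j+1}. ennreal \<bar>X u \<omega> - X (real j) \<omega>\<bar>)" for j \<omega>
  have p4: "4 / a > 1" using a0 a1 by (simp add: field_simps)
  then obtain c4 where c4: "c4 > 0"
    and h3: "\<forall>t > t0. Lp_norm_enn M (4 / a) (\<lambda>\<omega>. SUP u\<in>{t..t+1}. ennreal \<bar>X u \<omega> - X t \<omega>\<bar>)
              \<le> ennreal (c4 * t powr (a / 2))"
    using H by blast
  have AE2: "AE \<omega> in M. eventually (\<lambda>j. Z j \<omega> \<le> ennreal (real j powr a)) sequentially"
  proof (rule sup_part[OF P a0 a1 c4])
    show "1 \<le> N0" using N02 by simp
    show "Z j \<in> borel_measurable M" if "N0 \<le> j" for j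
    proof -
      have "real j > t0" using that N0t by (smt (verit) of_nat_le_iff)
      then show ?thesis unfolding Z_def by (rule supm)
    qed
    show "Lp_norm_enn M (4 / a) (Z j) \<le> ennreal (c4 * real j powr (a / 2))" if "N0 \<le> j" for j
    proof -
      have "real j > t0" using that N0t by (smt (verit) of_nat_le_iff)
      then show ?thesis unfolding Z_def using h3 by blast
    qed
  qed
  show "AE \<omega> in M. (\<lambda>t. X t \<omega>) \<in> o[at_top](\<lambda>t. t powr a * ln t powr (b1 + \<epsilon>))"
    using AE1 AE2
  proof eventually_elim
    case (elim \<omega>)
    obtain C J1 where J1: "\<And>j. j \<ge> J1 \<Longrightarrow> \<bar>X (real j) \<omega>\<bar> \<le> C * real j powr a * ln (real j) powr (b1 + \<epsilon> / 2)"
      using elim(1) by (auto simp: eventually_sequentially)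
    obtain J2 where J2: "\<And>j. j \<ge> J2 \<Longrightarrow> Z j \<omega> \<le> ennreal (real j powr a)"
      using elim(2) by (auto simp: eventually_sequentially)
    define J where "J = max (max J1 J2) 8"
    have "eventually (\<lambda>t. \<bar>X t \<omega>\<bar> \<le> (\<bar>C\<bar> + 1) * t powr a * ln t powr (b1 + \<epsilon> / 2)) at_top"
    proof (rule eventually_at_top_linorderI[of "real J"])
      fix t assume t: "t \<ge> real J"
      define j where "j = nat \<lfloor>t\<rfloor>"
      have J8: "real J \<ge> 8" by (simp add: J_def)
      have t0': "t \<ge> 0" using t J8 by linarith
      have jt: "real j \<le> t" "t < real j + 1" using t0' by (simp_all add: j_def)
      have "J \<le> j" using t unfolding j_def by (metis le_nat_floor)
      then have jJ1: "j \<ge> J1" and jJ2: "j \<ge> J2" and j8: "j \<ge> 8" by (auto simp: J_def)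
      have rj8: "real j \<ge> 8" using j8 by simp
      have "ln (real j) \<ge> ln 8" using rj8 by simp
      moreover have "ln (8::real) = 3 * ln 2"
        using ln_realpow[of 2 3] by simp
      ultimately have lnj: "ln (real j) \<ge> 1" using ln2_ge_two_thirds by linarith
      have "ennreal \<bar>X t \<omega> - X (real j) \<omega>\<bar> \<le> Z j \<omega>"
        unfolding Z_def using jt by (intro SUP_upper) auto
      also have "\<dots> \<le> ennreal (real j powr a)" by (rule J2[OF jJ2])
      finally have d: "\<bar>X t \<omega> - X (real j) \<omega>\<bar> \<le> real j powr a" by (simp add: ennreal_le_iff)
      have Xj: "\<bar>X (real j) \<omega>\<bar> \<le> C * real j powr a * ln (real j) powr (b1 + \<epsilon> / 2)" by (rule J1[OF jJ1])
      have L1: "ln (real j) powr (b1 + \<epsilon> / 2) \<ge> 1" using lnj b1 e by (intro ge_one_powr_ge_zero) auto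
      have "\<bar>X t \<omega>\<bar> \<le> C * real j powr a * ln (real j) powr (b1 + \<epsilon> / 2) + real j powr a"
        using d Xj by linarith
      also have "\<dots> \<le> \<bar>C\<bar> * (real j powr a * ln (real j) powr (b1 + \<epsilon> / 2)) + real j powr a * ln (real j) powr (b1 + \<epsilon> / 2)"
      proof (intro add_mono)
        show "C * real j powr a * ln (real j) powr (b1 + \<epsilon> / 2) \<le> \<bar>C\<bar> * (real j powr a * ln (real j) powr (b1 + \<epsilon> / 2))"
          by (simp add: mult.assoc mult_right_mono)
        show "real j powr a \<le> real j powr a * ln (real j) powr (b1 + \<epsilon> / 2)"
          using L1 mult_left_mono[OF L1, of "real j powr a"] by simp
      qed
      also have "\<dots> = (\<bar>C\<bar> + 1) * (real j powr a * ln (real j) powr (b1 + \<epsilon> / 2))" by (simp add: algebra_simps)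
      also have "\<dots> \<le> (\<bar>C\<bar> + 1) * (t powr a * ln t powr (b1 + \<epsilon> / 2))"
      proof (intro mult_left_mono mult_mono powr_mono2)
        show "real j \<le> t" by (rule jt(1))
        show "ln (real j) \<le> ln t" using jt rj8 by simp
      qed (use a0 b1 e lnj in auto)
      finally show "\<bar>X t \<omega>\<bar> \<le> (\<bar>C\<bar> + 1) * t powr a * ln t powr (b1 + \<epsilon> / 2)" by (simp add: mult.assoc)
    qed
    then show ?case by (rule small_o_step[OF e])
  qed
qed

end
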